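(* Let $\mathbb{A}$ and $\mathbb{B}$ be $\sigma$-structures and let $k\ge\max_{f\in\sigma}\mathrm{ar}(f)$. If there is an overcast from $\mathbb{A}$ to $\mathbb{B}$, then $\mathbb{A}\succeq_k\mathbb{B}$, i.e. $\mathrm{opt}_{k}^{\mathrm{frac}}(\mathbb{A},\mathbb{C})\ge\mathrm{opt}_{k}^{\mathrm{frac}}(\mathbb{B},\mathbb{C})$ for every $\sigma$-structure $\mathbb{C}$.
   Context: A $\sigma$-structure $\mathbb{A}$ is a finite domain $A$ with functions $f^{\mathbb{A}}\colon A^{\mathrm{ar}(f)}\to\mathbb{Q}_{\ge0}$, $f\in\sigma$; $\mathrm{tup}(\mathbb{A})$ is the set of pairs $(f,\bar x)$ with $\bar x\in A^{\mathrm{ar}(f)}$. An overcast from $\mathbb{A}$ to $\mathbb{B}$ is a probability distribution $\omega$ over maps $g\colon A\to B$ such that for every $(f,\bar x)\in\mathrm{tup}(\mathbb{B})$, $\mathbb{E}_{g\sim\omega}\sum_{\bar y:\,g(\bar y)=\bar x}f^{\mathbb{A}}(\bar y)\ge f^{\mathbb{B}}(\bar x)$. For a tuple $\bar x$, $\{\bar x\}$ denotes the set of its entries. The Sherali–Adams relaxation of level $k$ of $(\mathbb{A},\mathbb{C})$ is the linear program with a variable $\lambda(X,s)$ for each $X\subseteq A$ with $|X|\le k$ and each map $s\colon X\to C$, maximising $\sum_{(f,\bar x)\in\mathrm{tup}(\mathbb{A})}\sum_{s\colon\{\bar x\}\to C}\lambda(\{\bar x\},s)f^{\mathbb{A}}(\bar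 x)f^{\mathbb{C}}(s(\bar x))$ subject to: $\lambda(X,s)=\sum_{r\colon Y\to C,\ r|_X=s}\lambda(Y,r)$ for all $X\subseteq Y\subseteq A$ with $|Y|\le k$ and $s\colon X\to C$; $\sum_{s\colon X\to C}\lambda(X,s)=1$ for all $X\subseteq A$ with $|X|\le k$; and $\lambda(X,s)\ge0$. Its optimum value is denoted $\mathrm{opt}_k^{\mathrm{frac}}(\mathbb{A},\mathbb{C})$. *)

theory Defs
  imports "HOL-Probability.Probability_Mass_Function" "HOL-Library.FuncSet"
begin

text \<open>A sig-structure is a pair (dom, interp) of a finite nonempty domain and an
  interpretation interp f : dom^(ar f) -> Q_{\<ge>0}; tuples are lists of length ar f.\<close>

type_synonym ('s, 'a) struct = "'a set \<times> ('s \<Rightarrow> 'a list \<Rightarrow> rat)"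

definition tuples :: "('s \<Rightarrow> nat) \<Rightarrow> 'a set \<Rightarrow> 's \<Rightarrow> 'a list set" where
  "tuples ar A f = {xs. set xs \<subseteq> A \<and> length xs = ar f}"

definition tup :: "'s set \<Rightarrow> ('s \<Rightarrow> nat) \<Rightarrow> ('s, 'a) struct \<Rightarrow> ('s \<times> 'a list) set" where
  "tup sig ar S = {(f, xs). f \<in> sig \<and> xs \<in> tuples ar (fst S) f}"

definition is_structure :: "'s set \<Rightarrow> ('s \<Rightarrow> nat) \<Rightarrow> ('s, 'a) struct \<Rightarrow> bool" where
  "is_structure sig ar S \<longleftrightarrow> finite (fst S) \<and> fst S \<noteq> {} \<and>
     (\<forall>(f, xs) \<in> tup sig ar S. snd S f xs \<ge> 0)"

definition is_overcast :: "'s set \<Rightarrow> ('s \<Rightarrow> nat) \<Rightarrow> ('s, 'a) struct \<Rightarrow> ('s, 'b) struct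
    \<Rightarrow> ('a \<Rightarrow> 'b) pmf \<Rightarrow> bool" where
  "is_overcast sig ar SA SB \<omega> \<longleftrightarrow>
     set_pmf \<omega> \<subseteq> (fst SA \<rightarrow>\<^sub>E fst SB) \<and>
     (\<forall>(f, xs) \<in> tup sig ar SB.
        measure_pmf.expectation \<omega>
          (\<lambda>g. \<Sum>ys \<in> {ys \<in> tuples ar (fst SA) f. map g ys = xs}. real_of_rat (snd SA f ys))
        \<ge> real_of_rat (snd SB f xs))"

definition overcast_exists :: "'s set \<Rightarrow> ('s \<Rightarrow> nat) \<Rightarrow> ('s, 'a) struct \<Rightarrow> ('s, 'b) struct \<Rightarrow> bool" where
  "overcast_exists sig ar SA SB \<longleftrightarrow> (\<exists>\<omega>. is_overcast sig ar SA SB \<omega>)"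

text \<open>Sherali--Adams relaxation of level k: variables lam X s for X \<subseteq> A, card X \<le> k,
  s an extensional map X to C.\<close>
definition SA_feasible :: "nat \<Rightarrow> 'a set \<Rightarrow> 'c set \<Rightarrow> ('a set \<Rightarrow> ('a \<Rightarrow> 'c) \<Rightarrow> real) \<Rightarrow> bool" where
  "SA_feasible k A C lam \<longleftrightarrow>
     (\<forall>X Y s. X \<subseteq> Y \<and> Y \<subseteq> A \<and> card Y \<le> k \<and> s \<in> (X \<rightarrow>\<^sub>E C) \<longrightarrow>
        lam X s = (\<Sum>r \<in> {r \<in> Y \<rightarrow>\<^sub>E C. restrict r X = s}. lam Y r)) \<and>
     (\<forall>X. X \<subseteq> A \<and> card X \<le> k \<longrightarrow> (\<Sum>s \<in> X \<rightarrow>\<^sub>E C. lam X s) = 1) \<and>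
     (\<forall>X s. X \<subseteq> A \<and> card X \<le> k \<and> s \<in> (X \<rightarrow>\<^sub>E C) \<longrightarrow> lam X s \<ge> 0)"

definition SA_objective :: "'s set \<Rightarrow> ('s \<Rightarrow> nat) \<Rightarrow> ('s, 'a) struct \<Rightarrow> ('s, 'c) struct
    \<Rightarrow> ('a set \<Rightarrow> ('a \<Rightarrow> 'c) \<Rightarrow> real) \<Rightarrow> real" where
  "SA_objective sig ar SA SC lam =
     (\<Sum>(f, xs) \<in> tup sig ar SA. \<Sum>s \<in> (set xs \<rightarrow>\<^sub>E fst SC).
        lam (set xs) s * real_of_rat (snd SA f xs) * real_of_rat (snd SC f (map s xs)))"

definition opt_frac :: "'s set \<Rightarrow> ('s \<Rightarrow> nat) \<Rightarrow> nat \<Rightarrow> ('s, 'a) struct \<Rightarrow> ('s, 'c) struct \<Rightarrow> real" where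
  "opt_frac sig ar k SA SC =
     Sup {SA_objective sig ar SA SC lam | lam. SA_feasible k (fst SA) (fst SC) lam}"

end

theory Submission
  imports Defs
begin

lemma sum_group_filter:
  assumes "finite T" "finite S" "\<phi> ` T \<subseteq> S"
  shows "(\<Sum>s\<in>{s\<in>S. P s}. \<Sum>t\<in>{t\<in>T. \<phi> t = s}. h t) = (\<Sum>t\<in>{t\<in>T. P (\<phi> t)}. h t)"
proof -
  have "(\<Sum>s\<in>{s\<in>S. P s}. \<Sum>t\<in>{t\<in>{t\<in>T. P (\<phi> t)}. \<phi> t = s}. h t) = (\<Sum>t\<in>{t\<in>T. P (\<phi> t)}. h t)"
    by (rule sum.group) (use assms in auto)
  moreover have "(\<Sum>s\<in>{s\<in>S. P s}. \<Sum>t\<in>{t\<in>{t\<in>T. P (\<phi> t)}. \<phi> t = s}. h t)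
     = (\<Sum>s\<in>{s\<in>S. P s}. \<Sum>t\<in>{t\<in>T. \<phi> t = s}. h t)"
    by (rule sum.cong) (auto intro!: sum.cong)
  ultimately show ?thesis by simp
qed

lemma tup_Sigma: "tup sig ar S = Sigma sig (tuples ar (fst S))"
  unfolding tup_def by auto

lemma finite_tuples: "finite A \<Longrightarrow> finite (tuples ar A f)"
  unfolding tuples_def using finite_lists_length_eq by auto

lemma obj_nested:
  assumes "finite sig" "finite (fst SA)"
  shows "SA_objective sig ar SA SC lam = (\<Sum>f\<in>sig. \<Sum>xs\<in>tuples ar (fst SA) f.
     \<Sum>s \<in> (set xs \<rightarrow>\<^sub>E fst SC).
        lam (set xs) s * real_of_rat (snd SA f xs) * real_of_rat (snd SC f (map s xs)))"
  unfolding SA_objective_def tup_Sigma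
  by (subst sum.Sigma) (use assms finite_tuples in auto)

lemma restrict_restrict_sub: "X \<subseteq> Y \<Longrightarrow> restrict (restrict f Y) X = restrict f X"
  by (auto simp: restrict_def fun_eq_iff)

lemma L1:
  assumes fA: "finite A" and fB: "finite B" and fC: "finite C" and g: "g \<in> A \<rightarrow>\<^sub>E B"
    and XY: "X \<subseteq> Y" and YA: "Y \<subseteq> A" and cY: "card Y \<le> k" and s: "s \<in> X \<rightarrow>\<^sub>E C"
    and feas: "SA_feasible k B C lamB"
  shows "(\<Sum>r\<in>{r\<in>Y \<rightarrow>\<^sub>E C. restrict r X = s}. \<Sum>t\<in>{t\<in>g`Y \<rightarrow>\<^sub>E C. restrict (t \<circ> g) Y = r}. lamB (g`Y) t)
       = (\<Sum>u\<in>{u\<in>g`X \<rightarrow>\<^sub>E C. restrict (u \<circ> g) X = s}. lamB (g`X) u)"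
proof -
  have fY: "finite Y" using fA YA finite_subset by blast
  have gYB: "g ` Y \<subseteq> B" using g YA by auto
  have cgY: "card (g ` Y) \<le> k" using card_image_le[OF fY, of g] cY by linarith
  have fT: "finite (g`Y \<rightarrow>\<^sub>E C)" using fY fC by (simp add: finite_PiE)
  have "(\<Sum>r\<in>{r\<in>Y \<rightarrow>\<^sub>E C. restrict r X = s}. \<Sum>t\<in>{t\<in>g`Y \<rightarrow>\<^sub>E C. restrict (t \<circ> g) Y = r}. lamB (g`Y) t)
     = (\<Sum>t\<in>{t\<in>g`Y \<rightarrow>\<^sub>E C. restrict (restrict (t \<circ> g) Y) X = s}. lamB (g`Y) t)"
    by (rule sum_group_filter) (use fT fY fC in \<open>auto simp: finite_PiE\<close>)
  also have "\<dots> = (\<Sum>t\<in>{t\<in>g`Y \<rightarrow>\<^sub>E C. restrict (restrict t (g`X) \<circ> g) X = s}. lamB (g`Y) t)"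
    by (rule sum.cong) (use XY in \<open>auto simp: restrict_def fun_eq_iff\<close>)
  also have "\<dots> = (\<Sum>u\<in>{u\<in>g`X \<rightarrow>\<^sub>E C. restrict (u \<circ> g) X = s}. \<Sum>t\<in>{t\<in>g`Y \<rightarrow>\<^sub>E C. restrict t (g`X) = u}. lamB (g`Y) t)"
  proof (rule sum_group_filter[symmetric])
    have "finite X" using fY XY finite_subset by blast
    then show "finite (g`X \<rightarrow>\<^sub>E C)" using fC by (simp add: finite_PiE)
    show "(\<lambda>t. restrict t (g`X)) ` (g`Y \<rightarrow>\<^sub>E C) \<subseteq> g`X \<rightarrow>\<^sub>E C"
      using XY by (auto simp: PiE_iff)
  qed (use fT in auto)
  also have "\<dots> = (\<Sum>u\<in>{u\<in>g`X \<rightarrow>\<^sub>E C. restrict (u \<circ> g) X = s}. lamB (g`X) u)"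
  proof (rule sum.cong)
    fix u assume "u \<in> {u\<in>g`X \<rightarrow>\<^sub>E C. restrict (u \<circ> g) X = s}"
    then have u: "u \<in> g`X \<rightarrow>\<^sub>E C" by auto
    show "(\<Sum>t\<in>{t\<in>g`Y \<rightarrow>\<^sub>E C. restrict t (g`X) = u}. lamB (g`Y) t) = lamB (g`X) u"
    proof -
      have "g`X \<subseteq> g`Y" using XY by auto
      then have "lamB (g`X) u = (\<Sum>r \<in> {r \<in> g`Y \<rightarrow>\<^sub>E C. restrict r (g`X) = u}. lamB (g`Y) r)"
        using feas u gYB cgY unfolding SA_feasible_def by blast
      then show ?thesis by simp
    qed
  qed simp
  finally show ?thesis .
qed

lemma L2:
  assumes fA: "finite A" and fC: "finite C" and g: "g \<in> A \<rightarrow>\<^sub>E B"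
    and XA: "X \<subseteq> A" and cX: "card X \<le> k"
    and feas: "SA_feasible k B C lamB"
  shows "(\<Sum>s\<in>X \<rightarrow>\<^sub>E C. \<Sum>t\<in>{t\<in>g`X \<rightarrow>\<^sub>E C. restrict (t \<circ> g) X = s}. lamB (g`X) t) = 1"
proof -
  have fX: "finite X" using fA XA finite_subset by blast
  have gXB: "g ` X \<subseteq> B" using g XA by auto
  have cgX: "card (g ` X) \<le> k" using card_image_le[OF fX, of g] cX by linarith
  have "(\<Sum>s\<in>X \<rightarrow>\<^sub>E C. \<Sum>t\<in>{t\<in>g`X \<rightarrow>\<^sub>E C. restrict (t \<circ> g) X = s}. lamB (g`X) t)
      = (\<Sum>t\<in>g`X \<rightarrow>\<^sub>E C. lamB (g`X) t)"
    by (rule sum.group) (use fX fC in \<open>auto simp: finite_PiE PiE_iff\<close>)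
  also have "\<dots> = 1" using feas gXB cgX unfolding SA_feasible_def by blast
  finally show ?thesis .
qed

definition lamA_of :: "'a set \<Rightarrow> 'b set \<Rightarrow> 'c set \<Rightarrow> ('a \<Rightarrow> 'b) pmf \<Rightarrow> ('b set \<Rightarrow> ('b \<Rightarrow> 'c) \<Rightarrow> real)
   \<Rightarrow> 'a set \<Rightarrow> ('a \<Rightarrow> 'c) \<Rightarrow> real" where
  "lamA_of A B C \<omega> lamB X s = (\<Sum>g\<in>A \<rightarrow>\<^sub>E B. pmf \<omega> g *
      (\<Sum>t\<in>{t\<in>g`X \<rightarrow>\<^sub>E C. restrict (t \<circ> g) X = s}. lamB (g`X) t))"

lemma lamA_feasible:
  assumes fA: "finite A" and fB: "finite B" and fC: "finite C"
    and om: "set_pmf \<omega> \<subseteq> A \<rightarrow>\<^sub>E B" and feas: "SA_feasible k B C lamB"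
  shows "SA_feasible k A C (lamA_of A B C \<omega> lamB)"
  unfolding SA_feasible_def
proof (intro conjI allI impI)
  have fG: "finite (A \<rightarrow>\<^sub>E B)" using fA fB by (simp add: finite_PiE)
  have p1: "(\<Sum>g\<in>A \<rightarrow>\<^sub>E B. pmf \<omega> g) = 1" by (rule sum_pmf_eq_1[OF fG om])
  fix X Y s assume H: "X \<subseteq> Y \<and> Y \<subseteq> A \<and> card Y \<le> k \<and> s \<in> X \<rightarrow>\<^sub>E C"
  have "(\<Sum>r\<in>{r\<in>Y \<rightarrow>\<^sub>E C. restrict r X = s}. lamA_of A B C \<omega> lamB Y r)
     = (\<Sum>g\<in>A \<rightarrow>\<^sub>E B. pmf \<omega> g * (\<Sum>r\<in>{r\<in>Y \<rightarrow>\<^sub>E C. restrict r X = s}.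
          \<Sum>t\<in>{t\<in>g`Y \<rightarrow>\<^sub>E C. restrict (t \<circ> g) Y = r}. lamB (g`Y) t))"
    unfolding lamA_of_def by (subst sum.swap) (simp add: sum_distrib_left)
  also have "\<dots> = lamA_of A B C \<omega> lamB X s"
    unfolding lamA_of_def
    by (rule sum.cong[OF refl]) (subst L1[OF fA fB fC _ _ _ _ _ feas], use H in auto)
  finally show "lamA_of A B C \<omega> lamB X s = (\<Sum>r\<in>{r\<in>Y \<rightarrow>\<^sub>E C. restrict r X = s}. lamA_of A B C \<omega> lamB Y r)"
    by simp
next
  have fG: "finite (A \<rightarrow>\<^sub>E B)" using fA fB by (simp add: finite_PiE)
  have p1: "(\<Sum>g\<in>A \<rightarrow>\<^sub>E B. pmf \<omega> g) = 1" by (rule sum_pmf_eq_1[OF fG om])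
  fix X assume H: "X \<subseteq> A \<and> card X \<le> k"
  have "(\<Sum>s\<in>X \<rightarrow>\<^sub>E C. lamA_of A B C \<omega> lamB X s)
     = (\<Sum>g\<in>A \<rightarrow>\<^sub>E B. pmf \<omega> g * (\<Sum>s\<in>X \<rightarrow>\<^sub>E C.
          \<Sum>t\<in>{t\<in>g`X \<rightarrow>\<^sub>E C. restrict (t \<circ> g) X = s}. lamB (g`X) t))"
    unfolding lamA_of_def by (subst sum.swap) (simp add: sum_distrib_left)
  also have "\<dots> = (\<Sum>g\<in>A \<rightarrow>\<^sub>E B. pmf \<omega> g)"
    by (rule sum.cong[OF refl]) (subst L2[OF fA fC _ _ _ feas], use H in auto)
  finally show "(\<Sum>s\<in>X \<rightarrow>\<^sub>E C. lamA_of A B C \<omega> lamB X s) = 1" using p1 by simp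
next
  fix X s assume H: "X \<subseteq> A \<and> card X \<le> k \<and> s \<in> X \<rightarrow>\<^sub>E C"
  show "0 \<le> lamA_of A B C \<omega> lamB X s"
    unfolding lamA_of_def
  proof (intro sum_nonneg mult_nonneg_nonneg pmf_nonneg)
    fix g t assume g: "g \<in> A \<rightarrow>\<^sub>E B" and t: "t \<in> {t\<in>g`X \<rightarrow>\<^sub>E C. restrict (t \<circ> g) X = s}"
    have fX: "finite X" using fA H finite_subset by blast
    have "card (g ` X) \<le> k" using card_image_le[OF fX, of g] H by linarith
    moreover have "g ` X \<subseteq> B" using g H by auto
    ultimately show "0 \<le> lamB (g`X) t" using feas t unfolding SA_feasible_def by blast
  qed
qed

lemma L3:
  fixes lamB :: "'b set \<Rightarrow> ('b \<Rightarrow> 'c) \<Rightarrow> real" and a :: real and w :: "'c list \<Rightarrow> real"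
  assumes fA: "finite A" and fC: "finite C" and g: "g \<in> A \<rightarrow>\<^sub>E B" and xs: "set xs \<subseteq> A"
  shows "(\<Sum>s\<in>set xs \<rightarrow>\<^sub>E C. (\<Sum>t\<in>{t\<in>g`set xs \<rightarrow>\<^sub>E C. restrict (t \<circ> g) (set xs) = s}. lamB (g`set xs) t)
            * a * w (map s xs))
       = a * (\<Sum>t\<in>set (map g xs) \<rightarrow>\<^sub>E C. lamB (set (map g xs)) t * w (map t (map g xs)))"
proof -
  let ?X = "set xs"
  have "(\<Sum>s\<in>?X \<rightarrow>\<^sub>E C. (\<Sum>t\<in>{t\<in>g`?X \<rightarrow>\<^sub>E C. restrict (t \<circ> g) ?X = s}. lamB (g`?X) t) * a * w (map s xs))
     = (\<Sum>s\<in>?X \<rightarrow>\<^sub>E C. \<Sum>t\<in>{t\<in>g`?X \<rightarrow>\<^sub>E C. restrict (t \<circ> g) ?X = s}. lamB (g`?X) t * a * w (map s xs))"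
    by (intro sum.cong refl) (simp add: sum_distrib_right)
  also have "\<dots> = (\<Sum>s\<in>?X \<rightarrow>\<^sub>E C. \<Sum>t\<in>{t\<in>g`?X \<rightarrow>\<^sub>E C. restrict (t \<circ> g) ?X = s}. lamB (g`?X) t * a * w (map t (map g xs)))"
  proof (intro sum.cong refl)
    fix s t assume "t \<in> {t\<in>g`?X \<rightarrow>\<^sub>E C. restrict (t \<circ> g) ?X = s}"
    then have "s = restrict (t \<circ> g) ?X" by auto
    then have "map s xs = map t (map g xs)" by (auto simp: restrict_def)
    then show "lamB (g`?X) t * a * w (map s xs) = lamB (g`?X) t * a * w (map t (map g xs))"
      by (rule arg_cong[where f="\<lambda>z. lamB (g`?X) t * a * w z"])
  qed
  also have "\<dots> = (\<Sum>t\<in>g`?X \<rightarrow>\<^sub>E C. lamB (g`?X) t * a * w (map t (map g xs)))"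
    by (rule sum.group) (use fC in \<open>auto simp: finite_PiE PiE_iff\<close>)
  also have "\<dots> = a * (\<Sum>t\<in>set (map g xs) \<rightarrow>\<^sub>E C. lamB (set (map g xs)) t * w (map t (map g xs)))"
    by (simp add: sum_distrib_left mult_ac)
  finally show ?thesis .
qed

lemma swap_helper:
  fixes P :: "'g \<Rightarrow> real"
  assumes "finite G" "finite S"
  shows "(\<Sum>s\<in>S. (\<Sum>g\<in>G. P g * I g s) * a * c s) = (\<Sum>g\<in>G. P g * (\<Sum>s\<in>S. I g s * a * c s))"
proof -
  have "(\<Sum>s\<in>S. (\<Sum>g\<in>G. P g * I g s) * a * c s) = (\<Sum>s\<in>S. \<Sum>g\<in>G. P g * (I g s * a * c s))"
    by (intro sum.cong refl) (simp add: sum_distrib_right mult.assoc)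
  also have "\<dots> = (\<Sum>g\<in>G. \<Sum>s\<in>S. P g * (I g s * a * c s))" by (rule sum.swap)
  also have "\<dots> = (\<Sum>g\<in>G. P g * (\<Sum>s\<in>S. I g s * a * c s))" by (simp add: sum_distrib_left)
  finally show ?thesis .
qed

lemma obj_ge:
  fixes SA :: "('s,'a) struct" and SB :: "('s,'b) struct" and SC :: "('s,'c) struct"
  assumes fsig: "finite sig" and sA: "is_structure sig ar SA" and sB: "is_structure sig ar SB"
    and sC: "is_structure sig ar SC" and ark: "\<forall>f \<in> sig. ar f \<le> k"
    and oc: "is_overcast sig ar SA SB \<omega>" and feas: "SA_feasible k (fst SB) (fst SC) lamB"
  shows "SA_objective sig ar SA SC (lamA_of (fst SA) (fst SB) (fst SC) \<omega> lamB) \<ge> SA_objective sig ar SB SC lamB"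
proof -
  define A where "A = fst SA"
  define B where "B = fst SB"
  define C where "C = fst SC"
  define wA where "wA f xs = real_of_rat (snd SA f xs)" for f xs
  define wB where "wB f xs = real_of_rat (snd SB f xs)" for f xs
  define wC where "wC f xs = real_of_rat (snd SC f xs)" for f xs
  define G where "G = A \<rightarrow>\<^sub>E B"
  define H where "H f ys = (\<Sum>t\<in>set ys \<rightarrow>\<^sub>E C. lamB (set ys) t * wC f (map t ys))" for f and ys :: "'b list"
  define Sg where "Sg g f ys = (\<Sum>xs\<in>{xs\<in>tuples ar A f. map g xs = ys}. wA f xs)" for g :: "'a \<Rightarrow> 'b" and f ys
  have fA: "finite A" using sA unfolding is_structure_def A_def by blast
  have fB: "finite B" using sB unfolding is_structure_def B_def by blast
  have fC: "finite C" using sC unfolding is_structure_def C_def by blast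
  have fG: "finite G" unfolding G_def using fA fB by (simp add: finite_PiE)
  have om: "set_pmf \<omega> \<subseteq> G" using oc unfolding is_overcast_def G_def A_def B_def by blast
  have fTA: "\<And>f. finite (tuples ar A f)" using finite_tuples[OF fA] .
  have fTB: "\<And>f. finite (tuples ar B f)" using finite_tuples[OF fB] .
  have fS: "\<And>X. X \<subseteq> A \<Longrightarrow> finite (X \<rightarrow>\<^sub>E C)"
  proof -
    fix X assume "X \<subseteq> A"
    then have "finite X" using fA finite_subset by blast
    then show "finite (X \<rightarrow>\<^sub>E C)" using fC by (simp add: finite_PiE)
  qed
  have H0: "H f ys \<ge> 0" if f: "f \<in> sig" and ys: "ys \<in> tuples ar B f" for f ys
    unfolding H_def
  proof (intro sum_nonneg mult_nonneg_nonneg)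
    fix t assume t: "t \<in> set ys \<rightarrow>\<^sub>E C"
    have "card (set ys) \<le> k" using card_length[of ys] ys f ark unfolding tuples_def by force
    moreover have "set ys \<subseteq> B" using ys unfolding tuples_def by auto
    ultimately show "0 \<le> lamB (set ys) t" using feas t unfolding SA_feasible_def B_def C_def by blast
    have "(f, map t ys) \<in> tup sig ar SC" using f ys t unfolding tup_def tuples_def C_def by auto
    then show "0 \<le> wC f (map t ys)" using sC unfolding is_structure_def wC_def by auto
  qed
  have step2: "SA_objective sig ar SA SC (lamA_of A B C \<omega> lamB)
      = (\<Sum>f\<in>sig. \<Sum>xs\<in>tuples ar A f. \<Sum>g\<in>G. pmf \<omega> g * (wA f xs * H f (map g xs)))"
    unfolding obj_nested[OF fsig fA[unfolded A_def]] A_def[symmetric] C_def[symmetric]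
  proof (intro sum.cong refl)
    fix f xs assume xs: "xs \<in> tuples ar A f"
    then have xsA: "set xs \<subseteq> A" unfolding tuples_def by auto
    have "(\<Sum>s\<in>set xs \<rightarrow>\<^sub>E C. lamA_of A B C \<omega> lamB (set xs) s * real_of_rat (snd SA f xs) * real_of_rat (snd SC f (map s xs)))
       = (\<Sum>g\<in>G. pmf \<omega> g * (\<Sum>s\<in>set xs \<rightarrow>\<^sub>E C. (\<Sum>t\<in>{t\<in>g`set xs \<rightarrow>\<^sub>E C. restrict (t \<circ> g) (set xs) = s}. lamB (g`set xs) t) * wA f xs * wC f (map s xs)))"
      unfolding lamA_of_def G_def[symmetric] wA_def wC_def
      by (rule swap_helper[OF fG fS[OF xsA]])
    also have "\<dots> = (\<Sum>g\<in>G. pmf \<omega> g * (wA f xs * H f (map g xs)))"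
      unfolding H_def
      by (intro sum.cong refl arg_cong[where f="\<lambda>z. pmf \<omega> g * z" for g] L3[OF fA fC _ xsA])
         (simp add: G_def)
    finally show "(\<Sum>s\<in>set xs \<rightarrow>\<^sub>E C. lamA_of A B C \<omega> lamB (set xs) s * real_of_rat (snd SA f xs) * real_of_rat (snd SC f (map s xs)))
       = (\<Sum>g\<in>G. pmf \<omega> g * (wA f xs * H f (map g xs)))" .
  qed
  also have "\<dots> = (\<Sum>f\<in>sig. \<Sum>g\<in>G. \<Sum>xs\<in>tuples ar A f. pmf \<omega> g * (wA f xs * H f (map g xs)))"
    by (intro sum.cong refl) (rule sum.swap)
  also have "\<dots> = (\<Sum>g\<in>G. \<Sum>f\<in>sig. \<Sum>xs\<in>tuples ar A f. pmf \<omega> g * (wA f xs * H f (map g xs)))"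
    by (rule sum.swap)
  also have "\<dots> = (\<Sum>g\<in>G. pmf \<omega> g * (\<Sum>f\<in>sig. \<Sum>xs\<in>tuples ar A f. wA f xs * H f (map g xs)))"
    by (simp add: sum_distrib_left)
  also have "\<dots> = (\<Sum>g\<in>G. pmf \<omega> g * (\<Sum>f\<in>sig. \<Sum>ys\<in>tuples ar B f. H f ys * Sg g f ys))"
  proof (intro sum.cong refl arg_cong[where f="\<lambda>z. pmf \<omega> g * z" for g])
    fix g f assume g: "g \<in> G" and f: "f \<in> sig"
    have "(\<Sum>ys\<in>tuples ar B f. \<Sum>xs\<in>{xs\<in>tuples ar A f. map g xs = ys}. wA f xs * H f (map g xs))
        = (\<Sum>xs\<in>tuples ar A f. wA f xs * H f (map g xs))"
      by (rule sum.group) (use fTA fTB g in \<open>fastforce simp: tuples_def G_def PiE_iff\<close>)+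
    moreover have "(\<Sum>ys\<in>tuples ar B f. \<Sum>xs\<in>{xs\<in>tuples ar A f. map g xs = ys}. wA f xs * H f (map g xs))
        = (\<Sum>ys\<in>tuples ar B f. H f ys * Sg g f ys)"
      unfolding Sg_def by (intro sum.cong refl) (auto simp: sum_distrib_left mult.commute intro!: sum.cong)
    ultimately show "(\<Sum>xs\<in>tuples ar A f. wA f xs * H f (map g xs)) = (\<Sum>ys\<in>tuples ar B f. H f ys * Sg g f ys)"
      by simp
  qed
  also have "\<dots> = (\<Sum>f\<in>sig. \<Sum>ys\<in>tuples ar B f. H f ys * (\<Sum>g\<in>G. pmf \<omega> g * Sg g f ys))"
  proof -
    have "(\<Sum>g\<in>G. pmf \<omega> g * (\<Sum>f\<in>sig. \<Sum>ys\<in>tuples ar B f. H f ys * Sg g f ys))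
       = (\<Sum>g\<in>G. \<Sum>f\<in>sig. \<Sum>ys\<in>tuples ar B f. pmf \<omega> g * (H f ys * Sg g f ys))"
      by (simp add: sum_distrib_left)
    also have "\<dots> = (\<Sum>f\<in>sig. \<Sum>g\<in>G. \<Sum>ys\<in>tuples ar B f. pmf \<omega> g * (H f ys * Sg g f ys))"
      by (rule sum.swap)
    also have "\<dots> = (\<Sum>f\<in>sig. \<Sum>ys\<in>tuples ar B f. \<Sum>g\<in>G. pmf \<omega> g * (H f ys * Sg g f ys))"
      by (intro sum.cong refl) (rule sum.swap)
    also have "\<dots> = (\<Sum>f\<in>sig. \<Sum>ys\<in>tuples ar B f. H f ys * (\<Sum>g\<in>G. pmf \<omega> g * Sg g f ys))"
      by (simp add: sum_distrib_left mult_ac)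
    finally show ?thesis .
  qed
  also have "\<dots> \<ge> (\<Sum>f\<in>sig. \<Sum>ys\<in>tuples ar B f. H f ys * wB f ys)"
  proof (intro sum_mono mult_left_mono)
    fix f ys assume f: "f \<in> sig" and ys: "ys \<in> tuples ar B f"
    show "0 \<le> H f ys" using H0[OF f ys] .
    have "(f, ys) \<in> tup sig ar SB" using f ys unfolding tup_def B_def by auto
    then have "measure_pmf.expectation \<omega> (\<lambda>g. Sg g f ys) \<ge> wB f ys"
      using oc unfolding is_overcast_def Sg_def wA_def wB_def A_def by auto
    moreover have "measure_pmf.expectation \<omega> (\<lambda>g. Sg g f ys) = (\<Sum>g\<in>G. Sg g f ys * pmf \<omega> g)"
      by (rule integral_measure_pmf_real[OF fG]) (use om in auto)
    ultimately show "wB f ys \<le> (\<Sum>g\<in>G. pmf \<omega> g * Sg g f ys)" by (simp add: mult.commute)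
  qed
  also have "(\<Sum>f\<in>sig. \<Sum>ys\<in>tuples ar B f. H f ys * wB f ys) = SA_objective sig ar SB SC lamB"
    unfolding obj_nested[OF fsig fB[unfolded B_def]] B_def[symmetric] C_def[symmetric] H_def wB_def wC_def
    by (intro sum.cong refl) (simp add: sum_distrib_left sum_distrib_right mult_ac)
  finally show ?thesis unfolding A_def B_def C_def .
qed

lemma witness_feasible:
  assumes fA: "finite A" and fC: "finite C" and c0: "c0 \<in> C"
  shows "SA_feasible k A C (\<lambda>X s. if s = (\<lambda>x\<in>X. c0) then 1 else 0)"
  unfolding SA_feasible_def
proof (intro conjI allI impI)
  fix X Y s assume H: "X \<subseteq> Y \<and> Y \<subseteq> A \<and> card Y \<le> k \<and> s \<in> X \<rightarrow>\<^sub>E C"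
  have fY: "finite Y" using H fA finite_subset by blast
  have fS: "finite {r\<in>Y \<rightarrow>\<^sub>E C. restrict r X = s}" using fY fC by (simp add: finite_PiE)
  have r: "restrict (\<lambda>x\<in>Y. c0) X = (\<lambda>x\<in>X. c0)" using H by (auto simp: restrict_def fun_eq_iff)
  have "(\<Sum>r\<in>{r\<in>Y \<rightarrow>\<^sub>E C. restrict r X = s}. if r = (\<lambda>x\<in>Y. c0) then 1 else 0)
      = (if (\<lambda>x\<in>Y. c0) \<in> {r\<in>Y \<rightarrow>\<^sub>E C. restrict r X = s} then 1 else (0::real))"
    using sum.delta'[OF fS, of "\<lambda>x\<in>Y. c0" "\<lambda>_. 1::real"] by (simp add: eq_commute)
  also have "\<dots> = (if s = (\<lambda>x\<in>X. c0) then 1 else 0)" using r c0 by auto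
  finally show "(if s = (\<lambda>x\<in>X. c0) then 1 else 0) =
    (\<Sum>r\<in>{r\<in>Y \<rightarrow>\<^sub>E C. restrict r X = s}. if r = (\<lambda>x\<in>Y. c0) then 1 else (0::real))" by simp
next
  fix X assume H: "X \<subseteq> A \<and> card X \<le> k"
  have fX: "finite X" using H fA finite_subset by blast
  have fS: "finite (X \<rightarrow>\<^sub>E C)" using fX fC by (simp add: finite_PiE)
  have "(\<Sum>s\<in>X \<rightarrow>\<^sub>E C. if s = (\<lambda>x\<in>X. c0) then 1 else 0) = (if (\<lambda>x\<in>X. c0) \<in> X \<rightarrow>\<^sub>E C then 1 else (0::real))"
    using sum.delta[OF fS, of "\<lambda>x\<in>X. c0" "\<lambda>_. 1::real"] by simp
  then show "(\<Sum>s\<in>X \<rightarrow>\<^sub>E C. if s = (\<lambda>x\<in>X. c0) then 1 else 0) = (1::real)" using c0 by auto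
qed auto

lemma obj_bounded:
  fixes SA :: "('s,'a) struct" and SC :: "('s,'c) struct"
  assumes sA: "is_structure sig ar SA" and sC: "is_structure sig ar SC" and ark: "\<forall>f \<in> sig. ar f \<le> k"
    and feas: "SA_feasible k (fst SA) (fst SC) lam"
  shows "SA_objective sig ar SA SC lam \<le> (\<Sum>(f, xs) \<in> tup sig ar SA. \<Sum>s \<in> (set xs \<rightarrow>\<^sub>E fst SC).
        real_of_rat (snd SA f xs) * real_of_rat (snd SC f (map s xs)))"
  unfolding SA_objective_def
proof (intro sum_mono, clarify)
  fix f xs assume fx: "(f, xs) \<in> tup sig ar SA"
  then have f: "f \<in> sig" and xs: "set xs \<subseteq> fst SA" "length xs = ar f" unfolding tup_def tuples_def by auto
  have cX: "card (set xs) \<le> k" using card_length[of xs] xs f ark by force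
  show "(\<Sum>s\<in>set xs \<rightarrow>\<^sub>E fst SC. lam (set xs) s * real_of_rat (snd SA f xs) * real_of_rat (snd SC f (map s xs)))
     \<le> (\<Sum>s\<in>set xs \<rightarrow>\<^sub>E fst SC. real_of_rat (snd SA f xs) * real_of_rat (snd SC f (map s xs)))"
  proof (rule sum_mono)
    fix s assume s: "s \<in> set xs \<rightarrow>\<^sub>E fst SC"
    have fC: "finite (fst SC)" using sC unfolding is_structure_def by blast
    have fS: "finite (set xs \<rightarrow>\<^sub>E fst SC)" using fC by (simp add: finite_PiE)
    have l0: "\<And>s'. s' \<in> set xs \<rightarrow>\<^sub>E fst SC \<Longrightarrow> lam (set xs) s' \<ge> 0"
      using feas xs cX unfolding SA_feasible_def by blast
    have "(\<Sum>s'\<in>set xs \<rightarrow>\<^sub>E fst SC. lam (set xs) s') = 1"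
      using feas xs cX unfolding SA_feasible_def by blast
    moreover have "lam (set xs) s \<le> (\<Sum>s'\<in>set xs \<rightarrow>\<^sub>E fst SC. lam (set xs) s')"
      by (rule member_le_sum[OF s]) (use l0 fS in auto)
    ultimately have l1: "lam (set xs) s \<le> 1" by simp
    have wA: "real_of_rat (snd SA f xs) \<ge> 0" using sA fx unfolding is_structure_def by auto
    have "(f, map s xs) \<in> tup sig ar SC" using f xs s unfolding tup_def tuples_def by auto
    then have wC: "real_of_rat (snd SC f (map s xs)) \<ge> 0" using sC unfolding is_structure_def by auto
    have "lam (set xs) s * (real_of_rat (snd SA f xs) * real_of_rat (snd SC f (map s xs)))
       \<le> 1 * (real_of_rat (snd SA f xs) * real_of_rat (snd SC f (map s xs)))"
      by (rule mult_right_mono[OF l1]) (use wA wC in simp)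
    then show "lam (set xs) s * real_of_rat (snd SA f xs) * real_of_rat (snd SC f (map s xs))
       \<le> real_of_rat (snd SA f xs) * real_of_rat (snd SC f (map s xs))" by (simp add: mult.assoc)
  qed
qed

theorem proposition23:
  fixes sig :: "'s set" and ar :: "'s \<Rightarrow> nat" and k :: nat
    and SA :: "('s, 'a) struct" and SB :: "('s, 'b) struct"
  assumes "finite sig"
    and "is_structure sig ar SA" and "is_structure sig ar SB"
    and "\<forall>f \<in> sig. ar f \<le> k"
    and "overcast_exists sig ar SA SB"
  shows "\<forall>SC :: ('s, 'c) struct. is_structure sig ar SC \<longrightarrow>
           opt_frac sig ar k SA SC \<ge> opt_frac sig ar k SB SC"
proof (intro allI impI)
  fix SC :: "('s, 'c) struct" assume sC: "is_structure sig ar SC"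
  obtain \<omega> where oc: "is_overcast sig ar SA SB \<omega>" using assms(5) unfolding overcast_exists_def by blast
  have fA: "finite (fst SA)" using assms(2) unfolding is_structure_def by blast
  have fB: "finite (fst SB)" using assms(3) unfolding is_structure_def by blast
  have fC: "finite (fst SC)" and neC: "fst SC \<noteq> {}" using sC unfolding is_structure_def by blast+
  obtain c0 where c0: "c0 \<in> fst SC" using neC by blast
  have om: "set_pmf \<omega> \<subseteq> fst SA \<rightarrow>\<^sub>E fst SB" using oc unfolding is_overcast_def by blast
  show "opt_frac sig ar k SA SC \<ge> opt_frac sig ar k SB SC"
    unfolding opt_frac_def
  proof (rule cSup_mono)
    show "{SA_objective sig ar SB SC lam |lam. SA_feasible k (fst SB) (fst SC) lam} \<noteq> {}"
      using witness_feasible[OF fB fC c0, of k] by blast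
    show "bdd_above {SA_objective sig ar SA SC lam |lam. SA_feasible k (fst SA) (fst SC) lam}"
      unfolding bdd_above_def using obj_bounded[OF assms(2) sC assms(4)] by blast
    fix b assume "b \<in> {SA_objective sig ar SB SC lam |lam. SA_feasible k (fst SB) (fst SC) lam}"
    then obtain lamB where b: "b = SA_objective sig ar SB SC lamB" and feas: "SA_feasible k (fst SB) (fst SC) lamB"
      by blast
    show "\<exists>a\<in>{SA_objective sig ar SA SC lam |lam. SA_feasible k (fst SA) (fst SC) lam}. b \<le> a"
      using lamA_feasible[OF fA fB fC om feas] obj_ge[OF assms(1,2,3) sC assms(4) oc feas] b by blast
  qed
qed

end
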